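(* Let $\Gamma=\{\mathrm{id},\gamma\}$ and $\tau(\gamma)$ be the half-turn $(x,y,z)\mapsto(x,-y,-z)$. Let $G$ be a $\Gamma$-symmetric graph (write $u'=\phi(\gamma)u$) with an edge $vv'$ where $v\ne v'$. Let $G_1$ be the graph with $V(G_1)=V(G)\cup\{w,w'\}$ ($w,w'$ new, swapped by the action) and $E(G_1)=E(G)\setminus\{vv'\}\cup\{wv,wv',w'v,w'v',ww'\}$. If $G$ is $\tau(\Gamma)$-rigid on $\mathcal{Y}$, then $G_1$ is $\tau(\Gamma)$-rigid on $\mathcal{Y}$.
   Context: $\mathcal{Y}=\{(x,y,z):x^2+y^2=1\}$. A framework on $\mathcal{Y}$ is $(G,p)$, $G$ finite simple, $p:V\to\mathcal{Y}$, $p(u)\neq p(v)$ for edges $uv$. Its rigidity matrix $R_{\mathcal{Y}}(G,p)$ is the $(|E|+|V|)\times 3|V|$ matrix with a row for each edge $v_iv_j$ having $p(v_i)-p(v_j)$ in the columns of $v_i$ and $p(v_j)-p(v_i)$ in those of $v_j$, and a row for each vertex $v_i$ with $p(v_i)=(x_i,y_i,z_i)$ having $(x_i,y_i,0)$ in the columns of $v_i$ (zeros elsewhere). The framework is infinitesimally rigid if every kernel vector $u$ has the form $u_i=(0,0,a)+b(-y_i,x_i,0)$. A graph is $\Gamma$-symmetric if equipped with a homomorphism $\phi:\Gamma\to\operatorname{Aut}(G)$. A framework is $\Gamma$-symmetric w.r.t. $\phi,\tau$ if $\tau(\gamma)p(v)=p(\phi(\gamma)v)$. $G$ is $\tau(\Gamma)$-rigid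 if some $\Gamma$-symmetric framework $(G,p)$ on $\mathcal{Y}$ is infinitesimally rigid. *)

theory Defs
  imports "HOL-Analysis.Analysis"
begin

text \<open>Points of R^3 are modelled as real^3, with coordinates x = v$1, y = v$2, z = v$3.
  A finite simple graph is a finite vertex set V with an edge set E of 2-element subsets of V.\<close>

definition on_cylinder :: "real^3 \<Rightarrow> bool" where
  "on_cylinder q \<longleftrightarrow> (q$1)^2 + (q$2)^2 = 1"

definition simple_graph :: "'a set \<Rightarrow> 'a set set \<Rightarrow> bool" where
  "simple_graph V E \<longleftrightarrow> finite V \<and> E \<subseteq> {{u, v} | u v. u \<in> V \<and> v \<in> V \<and> u \<noteq> v}"

definition cyl_framework :: "'a set \<Rightarrow> 'a set set \<Rightarrow> ('a \<Rightarrow> real^3) \<Rightarrow> bool" where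
  "cyl_framework V E p \<longleftrightarrow> simple_graph V E \<and> (\<forall>v\<in>V. on_cylinder (p v))
     \<and> (\<forall>u\<in>V. \<forall>v\<in>V. {u, v} \<in> E \<longrightarrow> p u \<noteq> p v)"

text \<open>u is in the kernel of the rigidity matrix R_Y(G,p): the edge row of v_i v_j applied to u is
  (p_i - p_j).u_i + (p_j - p_i).u_j, the vertex row of v_i applied to u is (x_i,y_i,0).u_i.\<close>
definition cyl_inf_motion :: "'a set \<Rightarrow> 'a set set \<Rightarrow> ('a \<Rightarrow> real^3) \<Rightarrow> ('a \<Rightarrow> real^3) \<Rightarrow> bool" where
  "cyl_inf_motion V E p u \<longleftrightarrow>
     (\<forall>i\<in>V. \<forall>j\<in>V. {i, j} \<in> E \<longrightarrow> (p i - p j) \<bullet> u i + (p j - p i) \<bullet> u j = 0)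
   \<and> (\<forall>i\<in>V. vector [p i $ 1, p i $ 2, 0] \<bullet> u i = 0)"

definition cyl_inf_rigid :: "'a set \<Rightarrow> 'a set set \<Rightarrow> ('a \<Rightarrow> real^3) \<Rightarrow> bool" where
  "cyl_inf_rigid V E p \<longleftrightarrow>
     (\<forall>u. cyl_inf_motion V E p u \<longrightarrow>
        (\<exists>a b. \<forall>i\<in>V. u i = vector [0, 0, a] + b *\<^sub>R vector [- (p i $ 2), p i $ 1, 0]))"

text \<open>Gamma = {id, gamma} (cyclic of order 2). A homomorphism phi : Gamma -> Aut(G) is given by
  the image s = phi(gamma), an automorphism of G with s o s = id on V.\<close>
definition C2_symmetric_graph :: "'a set \<Rightarrow> 'a set set \<Rightarrow> ('a \<Rightarrow> 'a) \<Rightarrow> bool" where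
  "C2_symmetric_graph V E s \<longleftrightarrow> simple_graph V E \<and> bij_betw s V V
     \<and> (\<forall>u\<in>V. \<forall>v\<in>V. {u, v} \<in> E \<longleftrightarrow> {s u, s v} \<in> E)
     \<and> (\<forall>v\<in>V. s (s v) = v)"

definition half_turn :: "real^3 \<Rightarrow> real^3" where
  "half_turn q = vector [q $ 1, - (q $ 2), - (q $ 3)]"

text \<open>G is tau(Gamma)-rigid: some Gamma-symmetric framework (G,p) on Y is infinitesimally rigid
  (symmetry for the identity element is trivial).\<close>
definition half_turn_rigid :: "'a set \<Rightarrow> 'a set set \<Rightarrow> ('a \<Rightarrow> 'a) \<Rightarrow> bool" where
  "half_turn_rigid V E s \<longleftrightarrow>
     (\<exists>p. cyl_framework V E p \<and> (\<forall>v\<in>V. half_turn (p v) = p (s v)) \<and> cyl_inf_rigid V E p)"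

end

theory Submission imports Defs begin
lemma inner3: "(a::real^3) \<bullet> b = a$1*b$1 + a$2*b$2 + a$3*b$3"
  by (simp add: inner_vec_def sum_3)

lemma ht_comp[simp]: "half_turn q $ 1 = q$1" "half_turn q $ 2 = - q$2" "half_turn q $ 3 = - q$3"
  by (simp_all add: half_turn_def)

lemma ht_ht[simp]: "half_turn (half_turn q) = q"
  by (simp add: vec_eq_iff forall_3)

definition chooseQ :: "real^3 \<Rightarrow> real^3" where
 "chooseQ a = (if a$1 \<noteq> 0 \<and> a$2 \<noteq> 0 then vector [a$1, a$2, a$3+1]
   else if a$2 = 0 then vector [3/5, 4/5, 0]
   else if a$3 \<noteq> 0 then vector [3/5, 4/5, 4*a$2*a$3/5] else vector [3/5,4/5,1])"

lemma chooseQ_cases: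
  assumes cyl: "(a$1)^2 + (a$2)^2 = 1" and ne: "a \<noteq> half_turn a"
  shows "(a$1 \<noteq> 0 \<and> a$2 \<noteq> 0 \<and> chooseQ a = vector[a$1,a$2,a$3+1])
   \<or> (a$2 = 0 \<and> a$1*a$1 = 1 \<and> a$3 \<noteq> 0 \<and> chooseQ a = vector[3/5,4/5,0])
   \<or> (a$1 = 0 \<and> a$2*a$2 = 1 \<and> a$3 \<noteq> 0 \<and> chooseQ a = vector[3/5,4/5,4*a$2*a$3/5])
   \<or> (a$1 = 0 \<and> a$2*a$2 = 1 \<and> a$3 = 0 \<and> chooseQ a = vector[3/5,4/5,1])"
proof -
  have "a$2 \<noteq> 0 \<or> a$3 \<noteq> 0"
    using ne by (auto simp: vec_eq_iff forall_3)
  then show ?thesis using cyl unfolding chooseQ_def power2_eq_square by auto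
qed

lemma keyA:
  fixes a uv uv' uw uw' :: "real^3"
  assumes cyl: "(a$1)^2 + (a$2)^2 = 1" and ne: "a \<noteq> half_turn a"
   and h1: "vector [a$1, a$2, 0] \<bullet> uv = 0"
   and h2: "vector [half_turn a $1, half_turn a $2, 0] \<bullet> uv' = 0"
   and h3: "vector [chooseQ a$1, chooseQ a$2, 0] \<bullet> uw = 0"
   and h4: "vector [half_turn (chooseQ a) $1, half_turn (chooseQ a) $2, 0] \<bullet> uw' = 0"
   and e1: "(chooseQ a - a) \<bullet> uw + (a - chooseQ a) \<bullet> uv = 0"
   and e2: "(chooseQ a - half_turn a) \<bullet> uw + (half_turn a - chooseQ a) \<bullet> uv' = 0"
   and e3: "(half_turn (chooseQ a) - a) \<bullet> uw' + (a - half_turn (chooseQ a)) \<bullet> uv = 0"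
   and e4: "(half_turn (chooseQ a) - half_turn a) \<bullet> uw' + (half_turn a - half_turn (chooseQ a)) \<bullet> uv' = 0"
   and e5: "(chooseQ a - half_turn (chooseQ a)) \<bullet> uw + (half_turn (chooseQ a) - chooseQ a) \<bullet> uw' = 0"
  shows "(a - half_turn a) \<bullet> uv + (half_turn a - a) \<bullet> uv' = 0"
  using chooseQ_cases[OF cyl ne]
proof (elim disjE conjE)
  assume A: "a$1 \<noteq> 0" "a$2 \<noteq> 0" "chooseQ a = vector[a$1,a$2,a$3+1]"
  show ?thesis using h1 h2 h3 h4 e1 e2 e3 e4 e5 unfolding A(3) inner3 vector_minus_component vector_3 ht_comp by algebra
next
  assume A: "a$2 = 0" "a$1*a$1 = 1" "a$3 \<noteq> 0" "chooseQ a = vector[3/5,4/5,0]"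
  show ?thesis using h1 h2 h3 h4 e1 e2 e3 e4 e5 A(2) unfolding A(4) inner3 A(1) vector_minus_component vector_3 ht_comp by algebra
next
  assume A: "a$1 = 0" "a$2*a$2 = 1" "a$3 \<noteq> 0" "chooseQ a = vector[3/5,4/5,4*a$2*a$3/5]"
  have "a$3*a$3*((a - half_turn a) \<bullet> uv + (half_turn a - a) \<bullet> uv') = 0"
    using h1 h2 h3 h4 e1 e2 e3 e4 e5 A(2) unfolding A(4) inner3 A(1) vector_minus_component vector_3 ht_comp by algebra
  then show ?thesis using A(3) by simp
next
  assume A: "a$1 = 0" "a$2*a$2 = 1" "a$3 = 0" "chooseQ a = vector[3/5,4/5,1]"
  show ?thesis using h1 h2 h3 h4 e1 e2 e3 e4 e5 A(2) unfolding A(4) inner3 A(1) A(3) vector_minus_component vector_3 ht_comp by algebra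
qed

lemma keyB:
  fixes a c d :: "real^3"
  assumes cyl: "(a$1)^2 + (a$2)^2 = 1" and ne: "a \<noteq> half_turn a"
   and h1: "vector [chooseQ a$1, chooseQ a$2, 0] \<bullet> c = 0"
   and h2: "(chooseQ a - a) \<bullet> c = 0" and h3: "(chooseQ a - half_turn a) \<bullet> c = 0"
   and g1: "vector [half_turn (chooseQ a)$1, half_turn (chooseQ a)$2, 0] \<bullet> d = 0"
   and g2: "(half_turn (chooseQ a) - a) \<bullet> d = 0" and g3: "(half_turn (chooseQ a) - half_turn a) \<bullet> d = 0"
  shows "c = 0 \<and> d = 0"
  using chooseQ_cases[OF cyl ne]
proof (elim disjE conjE)
  assume A: "a$1 \<noteq> 0" "a$2 \<noteq> 0" "chooseQ a = vector[a$1,a$2,a$3+1]"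
  have "a$1*a$2*c$1 = 0 \<and> a$1*a$2*c$2 = 0 \<and> a$1*a$2*c$3 = 0"
    using h1 h2 h3 unfolding A(3) inner3 vector_minus_component vector_3 ht_comp by algebra
  moreover have "a$1*a$2*d$1 = 0 \<and> a$1*a$2*d$2 = 0 \<and> a$1*a$2*d$3 = 0"
    using g1 g2 g3 unfolding A(3) inner3 vector_minus_component vector_3 ht_comp by algebra
  ultimately show ?thesis using A(1,2) by (simp add: vec_eq_iff forall_3)
next
  assume A: "a$2 = 0" "a$1*a$1 = 1" "a$3 \<noteq> 0" "chooseQ a = vector[3/5,4/5,0]"
  have "a$1*a$3*c$1 = 0 \<and> a$1*a$3*c$2 = 0 \<and> a$1*a$3*c$3 = 0"
    using h1 h2 h3 unfolding A(4) inner3 A(1) vector_minus_component vector_3 ht_comp by algebra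
  moreover have "a$1*a$3*d$1 = 0 \<and> a$1*a$3*d$2 = 0 \<and> a$1*a$3*d$3 = 0"
    using g1 g2 g3 unfolding A(4) inner3 A(1) vector_minus_component vector_3 ht_comp by algebra
  moreover have "a$1 \<noteq> 0" using A(2) by auto
  ultimately show ?thesis using A(3) by (simp add: vec_eq_iff forall_3)
next
  assume A: "a$1 = 0" "a$2*a$2 = 1" "a$3 \<noteq> 0" "chooseQ a = vector[3/5,4/5,4*a$2*a$3/5]"
  have "a$3*c$1 = 0 \<and> a$3*c$2 = 0 \<and> a$3*c$3 = 0"
    using h1 h2 h3 A(2) unfolding A(4) inner3 A(1) vector_minus_component vector_3 ht_comp by algebra
  moreover have "a$3*d$1 = 0 \<and> a$3*d$2 = 0 \<and> a$3*d$3 = 0"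
    using g1 g2 g3 A(2) unfolding A(4) inner3 A(1) vector_minus_component vector_3 ht_comp by algebra
  ultimately show ?thesis using A(3) by (simp add: vec_eq_iff forall_3)
next
  assume A: "a$1 = 0" "a$2*a$2 = 1" "a$3 = 0" "chooseQ a = vector[3/5,4/5,1]"
  have "c$1 = 0 \<and> c$2 = 0 \<and> c$3 = 0"
    using h1 h2 h3 A(2) unfolding A(4) inner3 A(1) A(3) vector_minus_component vector_3 ht_comp by algebra
  moreover have "d$1 = 0 \<and> d$2 = 0 \<and> d$3 = 0"
    using g1 g2 g3 A(2) unfolding A(4) inner3 A(1) A(3) vector_minus_component vector_3 ht_comp by algebra
  ultimately show ?thesis by (simp add: vec_eq_iff forall_3)
qed

lemma chooseQ_props:
  assumes cyl: "(a$1)^2 + (a$2)^2 = 1" and ne: "a \<noteq> half_turn a"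
  shows "(chooseQ a $1)^2 + (chooseQ a $2)^2 = 1" "chooseQ a \<noteq> a" "chooseQ a \<noteq> half_turn a"
    "chooseQ a \<noteq> half_turn (chooseQ a)"
proof -
  have "(chooseQ a $1)^2 + (chooseQ a $2)^2 = 1 \<and> chooseQ a \<noteq> a \<and> chooseQ a \<noteq> half_turn a
    \<and> chooseQ a \<noteq> half_turn (chooseQ a)"
    using chooseQ_cases[OF cyl ne]
  proof (elim disjE conjE)
    assume A: "a$1 \<noteq> 0" "a$2 \<noteq> 0" "chooseQ a = vector[a$1,a$2,a$3+1]"
    show ?thesis using cyl A unfolding A(3) by (auto simp: vec_eq_iff forall_3)
  next
    assume A: "a$2 = 0" "a$1*a$1 = 1" "a$3 \<noteq> 0" "chooseQ a = vector[3/5,4/5,0]"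
    show ?thesis using A unfolding A(4) by (auto simp: vec_eq_iff forall_3 power2_eq_square)
  next
    assume A: "a$1 = 0" "a$2*a$2 = 1" "a$3 \<noteq> 0" "chooseQ a = vector[3/5,4/5,4*a$2*a$3/5]"
    show ?thesis using A unfolding A(4) by (auto simp: vec_eq_iff forall_3 power2_eq_square)
  next
    assume A: "a$1 = 0" "a$2*a$2 = 1" "a$3 = 0" "chooseQ a = vector[3/5,4/5,1]"
    show ?thesis using A unfolding A(4) by (auto simp: vec_eq_iff forall_3 power2_eq_square)
  qed
  then show "(chooseQ a $1)^2 + (chooseQ a $2)^2 = 1" "chooseQ a \<noteq> a" "chooseQ a \<noteq> half_turn a"
    "chooseQ a \<noteq> half_turn (chooseQ a)" by auto
qed

definition triv :: "real \<Rightarrow> real \<Rightarrow> real^3 \<Rightarrow> real^3" where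
  "triv al be q = vector [0, 0, al] + be *\<^sub>R vector [- (q $ 2), q $ 1, 0]"

lemma triv_edge: "(P - R) \<bullet> triv al be P + (R - P) \<bullet> triv al be R = 0"
  unfolding triv_def inner3 vector_minus_component vector_add_component vector_scaleR_component vector_3 real_scaleR_def
  by algebra

lemma triv_vert: "vector [P$1, P$2, 0] \<bullet> triv al be P = 0"
  unfolding triv_def inner3 vector_minus_component vector_add_component vector_scaleR_component vector_3 real_scaleR_def
  by algebra

lemma triv_motion:
  assumes "cyl_inf_motion V E p u"
  shows "cyl_inf_motion V E p (\<lambda>i. u i - triv al be (p i))"
  using assms unfolding cyl_inf_motion_def
proof (intro conjI ballI impI)
  fix i j assume i: "i \<in> V" and j: "j \<in> V" and e: "{i, j} \<in> E"
  from assms i j e have "(p i - p j) \<bullet> u i + (p j - p i) \<bullet> u j = 0"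
    unfolding cyl_inf_motion_def by blast
  then show "(p i - p j) \<bullet> (u i - triv al be (p i)) + (p j - p i) \<bullet> (u j - triv al be (p j)) = 0"
    using triv_edge[of "p i" "p j" al be] by (simp add: inner_diff_right algebra_simps)
next
  fix i assume i: "i \<in> V"
  from assms i have "vector [p i $ 1, p i $ 2, 0] \<bullet> u i = 0"
    unfolding cyl_inf_motion_def by blast
  then show "vector [p i $ 1, p i $ 2, 0] \<bullet> (u i - triv al be (p i)) = 0"
    using triv_vert[of "p i" al be] by (simp add: inner_diff_right)
qed

lemma sg_edge: "simple_graph V E \<Longrightarrow> {i, j} \<in> E \<Longrightarrow> i \<in> V \<and> j \<in> V \<and> i \<noteq> j"
  unfolding simple_graph_def by (auto simp: doubleton_eq_iff)

theorem lemma4p8: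
  fixes V :: "'a set" and E :: "'a set set" and s :: "'a \<Rightarrow> 'a" and v w w' :: 'a
  assumes "C2_symmetric_graph V E s"
    and "v \<in> V" and "s v \<noteq> v" and "{v, s v} \<in> E"
    and "w \<notin> V" and "w' \<notin> V" and "w \<noteq> w'"
    and "half_turn_rigid V E s"
  shows "half_turn_rigid (V \<union> {w, w'})
           ((E - {{v, s v}}) \<union> {{w, v}, {w, s v}, {w', v}, {w', s v}, {w, w'}})
           (s(w := w', w' := w))"
proof -
  let ?V1 = "V \<union> {w, w'}"
  let ?E1 = "(E - {{v, s v}}) \<union> {{w, v}, {w, s v}, {w', v}, {w', s v}, {w, w'}}"
  let ?s1 = "s(w := w', w' := w)"
  from assms(8) obtain p where fw: "cyl_framework V E p"
    and sym: "\<forall>v\<in>V. half_turn (p v) = p (s v)" and rig: "cyl_inf_rigid V E p"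
    unfolding half_turn_rigid_def by blast
  have cylV: "\<forall>v\<in>V. on_cylinder (p v)" using fw unfolding cyl_framework_def by blast
  have fwE: "\<forall>u\<in>V. \<forall>v\<in>V. {u, v} \<in> E \<longrightarrow> p u \<noteq> p v" using fw unfolding cyl_framework_def by blast
  have sg: "simple_graph V E" using assms(1) unfolding C2_symmetric_graph_def by blast
  have sV: "\<And>i. i \<in> V \<Longrightarrow> s i \<in> V"
    using assms(1) unfolding C2_symmetric_graph_def bij_betw_def by auto
  have svV: "s v \<in> V" using sV assms(2) .
  define a where "a = p v"
  have psv: "p (s v) = half_turn a" using sym assms(2) by (simp add: a_def)
  have cyl: "(a$1)^2 + (a$2)^2 = 1"
    using cylV assms(2) by (simp add: on_cylinder_def a_def)
  have ne: "a \<noteq> half_turn a"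
    using fwE assms(2) svV assms(4) psv unfolding a_def by metis
  define Q where "Q = chooseQ a"
  note QP = chooseQ_props[OF cyl ne, folded Q_def]
  have hQa: "half_turn Q \<noteq> a" using QP(3) by (metis ht_ht)
  have hQha: "half_turn Q \<noteq> half_turn a" using QP(2) by (metis ht_ht)
  define p1 where "p1 = p(w := Q, w' := half_turn Q)"
  have p1V: "\<And>i. i \<in> V \<Longrightarrow> p1 i = p i" using assms(5,6) by (auto simp: p1_def)
  have p1w: "p1 w = Q" using assms(7) by (simp add: p1_def)
  have p1w': "p1 w' = half_turn Q" by (simp add: p1_def)
  have p1v: "p1 v = a" using p1V assms(2) a_def by simp
  have p1sv: "p1 (s v) = half_turn a" using p1V svV psv by simp
  have wv: "w \<noteq> v" "w' \<noteq> v" "w \<noteq> s v" "w' \<noteq> s v" using assms(2,5,6) svV by auto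
  show ?thesis unfolding half_turn_rigid_def
  proof (intro exI conjI)
    show "cyl_framework ?V1 ?E1 p1"
      unfolding cyl_framework_def
    proof (intro conjI ballI impI)
      show "simple_graph ?V1 ?E1"
        unfolding simple_graph_def
      proof
        show "finite ?V1" using sg unfolding simple_graph_def by simp
        show "?E1 \<subseteq> {{x, y} |x y. x \<in> ?V1 \<and> y \<in> ?V1 \<and> x \<noteq> y}"
        proof
          fix e assume e: "e \<in> ?E1"
          show "e \<in> {{x, y} |x y. x \<in> ?V1 \<and> y \<in> ?V1 \<and> x \<noteq> y}"
          proof (cases "e \<in> E")
            case True
            then obtain x y where "e = {x, y}" "x \<in> V" "y \<in> V" "x \<noteq> y"
              using sg unfolding simple_graph_def by blast
            then show ?thesis by blast
          next
            case False
            then have "e = {w, v} \<or> e = {w, s v} \<or> e = {w', v} \<or> e = {w', s v} \<or> e = {w, w'}"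
              using e by simp
            then show ?thesis
            proof (elim disjE)
            qed (use wv assms(2,7) svV in blast)+
          qed
        qed
      qed
    next
      fix i assume "i \<in> ?V1"
      then consider "i \<in> V" | "i = w" | "i = w'" by blast
      then show "on_cylinder (p1 i)"
      proof cases
        case 1 then show ?thesis using cylV p1V by simp
      next
        case 2 then show ?thesis using p1w QP(1) by (simp add: on_cylinder_def)
      next
        case 3 then show ?thesis using p1w' QP(1) by (simp add: on_cylinder_def)
      qed
    next
      fix i j assume i: "i \<in> ?V1" and j: "j \<in> ?V1" and e: "{i, j} \<in> ?E1"
      show "p1 i \<noteq> p1 j"
      proof (cases "{i, j} \<in> E")
        case True
        with sg have "i \<in> V" "j \<in> V" using sg_edge by metis+
        then show ?thesis using fwE True p1V by simp
      next
        case False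
        then have "{i, j} = {w, v} \<or> {i, j} = {w, s v} \<or> {i, j} = {w', v} \<or> {i, j} = {w', s v} \<or> {i, j} = {w, w'}"
          using e by simp
        have d: "p1 w \<noteq> p1 v" "p1 w \<noteq> p1 (s v)" "p1 w' \<noteq> p1 v" "p1 w' \<noteq> p1 (s v)" "p1 w \<noteq> p1 w'"
          using p1w p1w' p1v p1sv QP(2,3,4) hQa hQha by auto
        show ?thesis using \<open>{i, j} = {w, v} \<or> {i, j} = {w, s v} \<or> {i, j} = {w', v} \<or> {i, j} = {w', s v} \<or> {i, j} = {w, w'}\<close>
        proof (elim disjE)
        qed (use d in \<open>auto simp: doubleton_eq_iff\<close>)+
      qed
    qed
  next
    show "\<forall>i\<in>?V1. half_turn (p1 i) = p1 (?s1 i)"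
    proof
      fix i assume i: "i \<in> ?V1"
      show "half_turn (p1 i) = p1 (?s1 i)"
      proof (cases "i \<in> V")
        case True
        then have "s i \<in> V" using sV by blast
        moreover have "?s1 i = s i" using True assms(5,6) by auto
        ultimately show ?thesis using True sym p1V by simp
      next
        case False
        then have "i = w \<or> i = w'" using i by blast
        then show ?thesis using p1w p1w' assms(7) by auto
      qed
    qed
  next
    show "cyl_inf_rigid ?V1 ?E1 p1"
      unfolding cyl_inf_rigid_def
    proof (intro allI impI)
      fix u assume mot: "cyl_inf_motion ?V1 ?E1 p1 u"
      have ED0: "\<forall>i\<in>?V1. \<forall>j\<in>?V1. {i, j} \<in> ?E1 \<longrightarrow> (p1 i - p1 j) \<bullet> u i + (p1 j - p1 i) \<bullet> u j = 0"
        using mot unfolding cyl_inf_motion_def by (rule conjunct1)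
      note ED = ED0[rule_format]
      have ND0: "\<forall>i\<in>?V1. vector [p1 i $ 1, p1 i $ 2, 0] \<bullet> u i = 0"
        using mot unfolding cyl_inf_motion_def by (rule conjunct2)
      note ND = ND0[rule_format]
      have inV: "v \<in> ?V1" "s v \<in> ?V1" "w \<in> ?V1" "w' \<in> ?V1" using assms(2) svV by auto
      have inE: "{w, v} \<in> ?E1" "{w, s v} \<in> ?E1" "{w', v} \<in> ?E1" "{w', s v} \<in> ?E1" "{w, w'} \<in> ?E1"
        by simp_all
      have key: "(a - half_turn a) \<bullet> u v + (half_turn a - a) \<bullet> u (s v) = 0"
      proof (rule keyA[OF cyl ne])
        show "vector [a$1, a$2, 0] \<bullet> u v = 0" using ND[OF inV(1)] assms(2) p1v by simp
        show "vector [half_turn a $1, half_turn a $2, 0] \<bullet> u (s v) = 0" using ND[OF inV(2)] svV p1sv by simp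
        show "vector [chooseQ a$1, chooseQ a$2, 0] \<bullet> u w = 0" using ND[OF inV(3)] p1w Q_def by simp
        show "vector [half_turn (chooseQ a) $1, half_turn (chooseQ a) $2, 0] \<bullet> u w' = 0"
          using ND[OF inV(4)] p1w' Q_def by simp
        show "(chooseQ a - a) \<bullet> u w + (a - chooseQ a) \<bullet> u v = 0"
          using ED[OF inV(3) inV(1) inE(1)] assms(2) p1w p1v Q_def by simp
        show "(chooseQ a - half_turn a) \<bullet> u w + (half_turn a - chooseQ a) \<bullet> u (s v) = 0"
          using ED[OF inV(3) inV(2) inE(2)] svV p1w p1sv Q_def by simp
        show "(half_turn (chooseQ a) - a) \<bullet> u w' + (a - half_turn (chooseQ a)) \<bullet> u v = 0"
          using ED[OF inV(4) inV(1) inE(3)] assms(2) p1w' p1v Q_def by simp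
        show "(half_turn (chooseQ a) - half_turn a) \<bullet> u w' + (half_turn a - half_turn (chooseQ a)) \<bullet> u (s v) = 0"
          using ED[OF inV(4) inV(2) inE(4)] svV p1w' p1sv Q_def by simp
        show "(chooseQ a - half_turn (chooseQ a)) \<bullet> u w + (half_turn (chooseQ a) - chooseQ a) \<bullet> u w' = 0"
          using ED[OF inV(3) inV(4) inE(5)] p1w p1w' Q_def by simp
      qed
      have GM: "cyl_inf_motion V E p u"
        unfolding cyl_inf_motion_def
      proof (intro conjI ballI impI)
        fix i j assume i: "i \<in> V" and j: "j \<in> V" and e: "{i, j} \<in> E"
        show "(p i - p j) \<bullet> u i + (p j - p i) \<bullet> u j = 0"
        proof (cases "{i, j} = {v, s v}")
          case True
          then have "(i = v \<and> j = s v) \<or> (i = s v \<and> j = v)" by (auto simp: doubleton_eq_iff)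
          then show ?thesis using key psv a_def by (auto simp: add.commute)
        next
          case False
          then have e1: "{i, j} \<in> ?E1" using e by simp
          have "i \<in> ?V1" "j \<in> ?V1" using i j by auto
          then have "(p1 i - p1 j) \<bullet> u i + (p1 j - p1 i) \<bullet> u j = 0" by (rule ED[OF _ _ e1])
          then show ?thesis using p1V i j by simp
        qed
      next
        fix i assume i: "i \<in> V"
        show "vector [p i $ 1, p i $ 2, 0] \<bullet> u i = 0" using ND[of i] i p1V by simp
      qed
      from rig GM obtain al be where tr: "\<forall>i\<in>V. u i = vector [0, 0, al] + be *\<^sub>R vector [- (p i $ 2), p i $ 1, 0]"
        unfolding cyl_inf_rigid_def by blast
      define u' where "u' = (\<lambda>i. u i - triv al be (p1 i))"
      have mot': "cyl_inf_motion ?V1 ?E1 p1 u'" using triv_motion[OF mot] u'_def by simp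
      have u'V: "\<And>i. i \<in> V \<Longrightarrow> u' i = 0" using tr p1V by (simp add: u'_def triv_def)
      have ED'0: "\<forall>i\<in>?V1. \<forall>j\<in>?V1. {i, j} \<in> ?E1 \<longrightarrow> (p1 i - p1 j) \<bullet> u' i + (p1 j - p1 i) \<bullet> u' j = 0"
        using mot' unfolding cyl_inf_motion_def by (rule conjunct1)
      note ED' = ED'0[rule_format]
      have ND'0: "\<forall>i\<in>?V1. vector [p1 i $ 1, p1 i $ 2, 0] \<bullet> u' i = 0"
        using mot' unfolding cyl_inf_motion_def by (rule conjunct2)
      note ND' = ND'0[rule_format]
      have z: "u' w = 0 \<and> u' w' = 0"
      proof (rule keyB[OF cyl ne])
        show "vector [chooseQ a$1, chooseQ a$2, 0] \<bullet> u' w = 0" using ND'[OF inV(3)] p1w Q_def by simp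
        show "(chooseQ a - a) \<bullet> u' w = 0" using ED'[OF inV(3) inV(1) inE(1)] assms(2) p1w p1v Q_def u'V by simp
        show "(chooseQ a - half_turn a) \<bullet> u' w = 0" using ED'[OF inV(3) inV(2) inE(2)] svV p1w p1sv Q_def u'V by simp
        show "vector [half_turn (chooseQ a)$1, half_turn (chooseQ a)$2, 0] \<bullet> u' w' = 0"
          using ND'[OF inV(4)] p1w' Q_def by simp
        show "(half_turn (chooseQ a) - a) \<bullet> u' w' = 0" using ED'[OF inV(4) inV(1) inE(3)] assms(2) p1w' p1v Q_def u'V by simp
        show "(half_turn (chooseQ a) - half_turn a) \<bullet> u' w' = 0"
          using ED'[OF inV(4) inV(2) inE(4)] svV p1w' p1sv Q_def u'V by simp
      qed
      show "\<exists>a b. \<forall>i\<in>?V1. u i = vector [0, 0, a] + b *\<^sub>R vector [- (p1 i $ 2), p1 i $ 1, 0]"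
      proof (intro exI ballI)
        fix i assume i: "i \<in> ?V1"
        show "u i = vector [0, 0, al] + be *\<^sub>R vector [- (p1 i $ 2), p1 i $ 1, 0]"
        proof (cases "i \<in> V")
          case True then show ?thesis using tr p1V by simp
        next
          case False
          then have "i = w \<or> i = w'" using i by blast
          then have "u' i = 0" using z by blast
          then show ?thesis by (simp add: u'_def triv_def)
        qed
      qed
    qed
  qed
qed
end
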